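(* Let $p$ be a prime, let $f\ge1$, and let $q\ge1$ be a power of $p$. For $0\le i\le p^f-2$ and $0\le r\le q-1$ let $A_{i,r}=\{m\ge0: m\equiv i\pmod{p^f-1},\ m\equiv r\pmod q\}$. Let $s(n)_{n\ge0}$ be a sequence of $p$-adic integers with an approximate twisted interpolation $\{(s_{i,r},A_{i,r}):0\le i\le p^f-2,\ 0\le r\le q-1\}$. Then $$\lim_{\alpha\to\infty}\frac{|\{s(n)\bmod p^\alpha:n\ge0\}|}{p^\alpha}=\mu\Big(\mathbb{Z}_p\cap\bigcup_{i,r}s_{i,r}(r+q\mathbb{Z}_p)\Big).$$
   Context: Here each $s_{i,r}:\mathbb{Z}_p\to K$ is continuous, $K$ a finite extension of $\mathbb{Q}_p$ with the unique absolute value $|\cdot|_p$ extending the $p$-adic one, and "approximate twisted interpolation" means there are constants $C\ge0$, $0\le D<1$ with $|s(n)-s_{i,r}(n)|_p\le CD^n$ for all $n\in A_{i,r}$ and all $i,r$. $\mathbb{Z}_p$ is regarded as a subset of $K$. $\mu$ is the Haar measure on $\mathbb{Z}_p$ normalized by $\mu(m+p^\alpha\mathbb{Z}_p)=p^{-\alpha}$. *)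

theory Defs
  imports "HOL-Analysis.Analysis" "HOL-Probability.Probability"
begin

text \<open>p-adic integers, represented as compatible systems of residues:
  x k is the residue of x modulo p^k, taken in {0..<p^k}.\<close>

definition zp :: "nat \<Rightarrow> (nat \<Rightarrow> int) set" where
  "zp p = {x. \<forall>k. 0 \<le> x k \<and> x k < int p ^ k \<and> x (Suc k) mod (int p ^ k) = x k}"

definition zp_of_nat :: "nat \<Rightarrow> nat \<Rightarrow> (nat \<Rightarrow> int)" where
  "zp_of_nat p n = (\<lambda>k. int n mod (int p ^ k))"

definition zp_add :: "nat \<Rightarrow> (nat \<Rightarrow> int) \<Rightarrow> (nat \<Rightarrow> int) \<Rightarrow> (nat \<Rightarrow> int)" where
  "zp_add p x y = (\<lambda>k. (x k + y k) mod (int p ^ k))"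

definition zp_mul :: "nat \<Rightarrow> (nat \<Rightarrow> int) \<Rightarrow> (nat \<Rightarrow> int) \<Rightarrow> (nat \<Rightarrow> int)" where
  "zp_mul p x y = (\<lambda>k. (x k * y k) mod (int p ^ k))"

definition padic_abs :: "nat \<Rightarrow> (nat \<Rightarrow> int) \<Rightarrow> real" where
  "padic_abs p x = (if (\<forall>k. x k = 0) then 0
                    else inverse (real p ^ (LEAST k. x (Suc k) \<noteq> 0)))"

definition zp_ball :: "nat \<Rightarrow> (nat \<Rightarrow> int) \<Rightarrow> nat \<Rightarrow> (nat \<Rightarrow> int) set" where
  "zp_ball p m a = {x \<in> zp p. x a = m a}"

definition zp_coset :: "nat \<Rightarrow> nat \<Rightarrow> nat \<Rightarrow> (nat \<Rightarrow> int) set" where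
  "zp_coset p r q = {zp_add p (zp_of_nat p r) (zp_mul p (zp_of_nat p q) z) | z. z \<in> zp p}"

definition zp_continuous :: "nat \<Rightarrow> ('k::field \<Rightarrow> real) \<Rightarrow> ((nat \<Rightarrow> int) \<Rightarrow> 'k) \<Rightarrow> bool" where
  "zp_continuous p absK g \<longleftrightarrow>
     (\<forall>x\<in>zp p. \<forall>\<epsilon>>0. \<exists>a. \<forall>y\<in>zp p. y a = x a \<longrightarrow> absK (g y - g x) < \<epsilon>)"

text \<open>K is a finite extension of Q_p, where Z_p is embedded in K via iota
  (an additive and multiplicative map sending 1 to 1), and absK is an absolute value
  on K extending the p-adic one (hence the unique such extension).\<close>
definition padic_extension :: "nat \<Rightarrow> ((nat \<Rightarrow> int) \<Rightarrow> 'k::field) \<Rightarrow> ('k \<Rightarrow> real) \<Rightarrow> bool" where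
  "padic_extension p iota absK \<longleftrightarrow>
     (\<forall>x\<in>zp p. \<forall>y\<in>zp p. iota (zp_add p x y) = iota x + iota y) \<and>
     (\<forall>x\<in>zp p. \<forall>y\<in>zp p. iota (zp_mul p x y) = iota x * iota y) \<and>
     iota (zp_of_nat p 1) = 1 \<and>
     (\<forall>z. absK z \<ge> 0 \<and> (absK z = 0 \<longleftrightarrow> z = 0)) \<and>
     (\<forall>z w. absK (z * w) = absK z * absK w) \<and>
     (\<forall>z w. absK (z + w) \<le> absK z + absK w) \<and>
     (\<forall>x\<in>zp p. absK (iota x) = padic_abs p x) \<and>
     (\<exists>B. finite B \<and> (\<forall>z. \<exists>c. (\<forall>b\<in>B. \<exists>u\<in>zp p. \<exists>v\<in>zp p. v \<noteq> zp_of_nat p 0 \<and> c b = iota u / iota v)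
                              \<and> z = (\<Sum>b\<in>B. c b * b)))"

end

theory Submission
  imports Defs "HOL-Number_Theory.Number_Theory"
begin


lemma zpD: "x \<in> zp p \<Longrightarrow> 0 \<le> x k \<and> x k < int p ^ k \<and> x (Suc k) mod (int p ^ k) = x k"
  by (simp add: zp_def)

lemma zp_compat:
  assumes "x \<in> zp p" "j \<le> k" shows "x k mod (int p ^ j) = x j"
  using assms(2)
proof (induction k)
  case 0 then show ?case using zpD[OF assms(1), of 0] by simp
next
  case (Suc k)
  show ?case
  proof (cases "j = Suc k")
    case True then show ?thesis using zpD[OF assms(1), of "Suc k"] by simp
  next
    case False
    then have "j \<le> k" using Suc by simp
    have dv: "int p ^ j dvd int p ^ k" using \<open>j \<le> k\<close> by (simp add: le_imp_power_dvd)
    have "x (Suc k) mod int p ^ j = (x (Suc k) mod int p ^ k) mod int p ^ j"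
      using dv by (simp add: mod_mod_cancel)
    also have "\<dots> = x j" using zpD[OF assms(1), of k] Suc.IH[OF \<open>j \<le> k\<close>] by simp
    finally show ?thesis .
  qed
qed

lemma zp_0: "x \<in> zp p \<Longrightarrow> x 0 = 0"
  using zpD[of x p 0] by simp

lemma zp_eqI: "x \<in> zp p \<Longrightarrow> y \<in> zp p \<Longrightarrow> (\<And>k. x k = y k) \<Longrightarrow> x = y"
  by auto

lemma zpI:
  assumes "\<And>k. 0 \<le> x k" "\<And>k. x k < int p ^ k" "\<And>k. x (Suc k) mod (int p ^ k) = x k"
  shows "x \<in> zp p" using assms by (simp add: zp_def)

context fixes p :: nat assumes p2: "p \<ge> 2" begin

lemma ppos: "(0::int) < int p ^ k" using p2 by simp

lemma dvd_pow_suc: "int p ^ k dvd int p ^ Suc k" by simp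

lemma modsuc[simp]: "(a::int) mod (int p * int p ^ k) mod int p ^ k = a mod int p ^ k"
  by (rule mod_mod_cancel) simp

lemma zp_of_nat_zp: "zp_of_nat p n \<in> zp p"
  unfolding zp_of_nat_def
  by (rule zpI) (auto simp: pos_mod_sign[OF ppos] pos_mod_bound[OF ppos])

lemma zp_add_zp: "x \<in> zp p \<Longrightarrow> y \<in> zp p \<Longrightarrow> zp_add p x y \<in> zp p"
  unfolding zp_add_def
proof (rule zpI)
  fix k assume x: "x \<in> zp p" and y: "y \<in> zp p"
  have "(x (Suc k) + y (Suc k)) mod int p ^ Suc k mod int p ^ k = (x (Suc k) + y (Suc k)) mod int p ^ k"
    by simp
  also have "\<dots> = (x (Suc k) mod int p ^ k + y (Suc k) mod int p ^ k) mod int p ^ k"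
    by (simp add: mod_add_eq)
  also have "\<dots> = (x k + y k) mod int p ^ k" using zpD[OF x, of k] zpD[OF y, of k] by simp
  finally show "(x (Suc k) + y (Suc k)) mod int p ^ Suc k mod int p ^ k = (x k + y k) mod int p ^ k" .
qed (auto simp: pos_mod_sign[OF ppos] pos_mod_bound[OF ppos])

lemma zp_mul_zp: "x \<in> zp p \<Longrightarrow> y \<in> zp p \<Longrightarrow> zp_mul p x y \<in> zp p"
  unfolding zp_mul_def
proof (rule zpI)
  fix k assume x: "x \<in> zp p" and y: "y \<in> zp p"
  have "(x (Suc k) * y (Suc k)) mod int p ^ Suc k mod int p ^ k = (x (Suc k) * y (Suc k)) mod int p ^ k"
    by simp
  also have "\<dots> = (x (Suc k) mod int p ^ k * (y (Suc k) mod int p ^ k)) mod int p ^ k"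
    by (simp add: mod_mult_eq)
  also have "\<dots> = (x k * y k) mod int p ^ k" using zpD[OF x, of k] zpD[OF y, of k] by simp
  finally show "(x (Suc k) * y (Suc k)) mod int p ^ Suc k mod int p ^ k = (x k * y k) mod int p ^ k" .
qed (auto simp: pos_mod_sign[OF ppos] pos_mod_bound[OF ppos])

definition zp_neg :: "(nat \<Rightarrow> int) \<Rightarrow> (nat \<Rightarrow> int)" where
  "zp_neg x = (\<lambda>k. (- x k) mod (int p ^ k))"

lemma zp_neg_zp: "x \<in> zp p \<Longrightarrow> zp_neg x \<in> zp p"
  unfolding zp_neg_def
proof (rule zpI)
  fix k assume x: "x \<in> zp p"
  have "(- x (Suc k)) mod int p ^ Suc k mod int p ^ k = (- x (Suc k)) mod int p ^ k"
    by simp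
  also have "\<dots> = (- (x (Suc k) mod int p ^ k)) mod int p ^ k"
    by (simp add: mod_minus_eq)
  also have "\<dots> = (- x k) mod int p ^ k" using zpD[OF x, of k] by simp
  finally show "(- x (Suc k)) mod int p ^ Suc k mod int p ^ k = (- x k) mod int p ^ k" .
qed (auto simp: pos_mod_sign[OF ppos] pos_mod_bound[OF ppos])

lemma zp_add_neg: "zp_add p x (zp_neg x) = zp_of_nat p 0"
  unfolding zp_add_def zp_neg_def zp_of_nat_def
  by (rule ext) (simp add: mod_add_right_eq)

lemma zp_add_neg_val: "zp_add p x (zp_neg y) k = (x k - y k) mod int p ^ k"
  unfolding zp_add_def zp_neg_def by (simp add: mod_add_right_eq)

lemma zp_zero_add: "zp_add p (zp_of_nat p 0) (zp_of_nat p 0) = zp_of_nat p 0"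
  unfolding zp_add_def zp_of_nat_def by simp

lemma padic_abs_le:
  assumes d: "d \<in> zp p" and dk: "d k = 0"
  shows "padic_abs p d \<le> inverse (real p ^ k)"
proof (cases "\<forall>j. d j = 0")
  case True then show ?thesis by (simp add: padic_abs_def)
next
  case False
  then obtain m where m: "d m \<noteq> 0" by auto
  then have "m \<noteq> 0" using zp_0[OF d] m by metis
  then obtain j where mj: "m = Suc j" by (cases m) auto
  have ex: "d (Suc j) \<noteq> 0" using m mj by simp
  define v where "v = (LEAST j. d (Suc j) \<noteq> 0)"
  have v: "d (Suc v) \<noteq> 0" unfolding v_def by (rule LeastI[of _ j]) (rule ex)
  have "k \<le> v"
  proof (rule ccontr)
    assume "\<not> k \<le> v"
    then have "Suc v \<le> k" by simp
    then have "d k mod int p ^ Suc v = d (Suc v)" by (rule zp_compat[OF d])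
    then show False using dk v by simp
  qed
  then have "real p ^ k \<le> real p ^ v" using p2 by (intro power_increasing) auto
  then have "inverse (real p ^ v) \<le> inverse (real p ^ k)"
    using p2 by (intro le_imp_inverse_le) auto
  then show ?thesis using False by (simp add: padic_abs_def v_def)
qed

lemma padic_abs_small:
  assumes d: "d \<in> zp p" and lt: "padic_abs p d < inverse (real p ^ k)"
  shows "d k = 0"
proof (rule ccontr)
  assume dk: "d k \<noteq> 0"
  then have "k \<noteq> 0" using zp_0[OF d] dk by metis
  then obtain j where kj: "k = Suc j" by (cases k) auto
  have nz: "\<not> (\<forall>j. d j = 0)" using dk by auto
  define v where "v = (LEAST j. d (Suc j) \<noteq> 0)"
  have "v \<le> j" unfolding v_def by (rule Least_le) (use dk kj in simp)
  then have "real p ^ v \<le> real p ^ k" using p2 kj by (intro power_increasing) auto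
  then have "inverse (real p ^ k) \<le> inverse (real p ^ v)"
    using p2 by (intro le_imp_inverse_le) auto
  then show False using lt nz by (simp add: padic_abs_def v_def)
qed

end



lemma absK_facts:
  assumes K: "padic_extension p iota absK"
  shows "\<And>z. absK z \<ge> 0" "\<And>z. absK z = 0 \<longleftrightarrow> z = 0"
    "\<And>z w. absK (z + w) \<le> absK z + absK w" "\<And>z w. absK (z * w) = absK z * absK w"
  using K unfolding padic_extension_def by auto

lemma absK_minus:
  assumes K: "padic_extension p iota (absK::'k::field \<Rightarrow> real)"
  shows "absK (- z) = absK z"
proof -
  note F = absK_facts[OF K]
  have "absK 1 = absK 1 * absK 1" using F(4)[of 1 1] by simp
  moreover have "absK 1 \<noteq> 0" using F(2)[of 1] by simp
  ultimately have a1: "absK 1 = 1" by (metis mult_cancel_left1)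
  have "absK (-1) * absK (-1) = 1" using F(4)[of "-1" "-1"] a1 by simp
  then have am1: "absK (-1) = 1" using F(1)[of "-1"]
    by (metis abs_of_nonneg mult_cancel_right1 mult_left_cancel real_sqrt_abs2 real_sqrt_mult_self real_sqrt_one zero_neq_one)
  show ?thesis using F(4)[of "-1" z] am1 by simp
qed

lemma absK_tri3:
  assumes K: "padic_extension p iota (absK::'k::field \<Rightarrow> real)"
  shows "absK (a - d) \<le> absK (a - b) + absK (b - c) + absK (c - d)"
proof -
  note F = absK_facts[OF K]
  have "a - d = (a - b) + ((b - c) + (c - d))" by simp
  then have "absK (a - d) \<le> absK (a - b) + absK ((b - c) + (c - d))" using F(3) by metis
  also have "\<dots> \<le> absK (a - b) + (absK (b - c) + absK (c - d))"
    using F(3)[of "b - c" "c - d"] by linarith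
  finally show ?thesis by simp
qed

lemma absK_zeroI:
  assumes K: "padic_extension p iota (absK::'k::field \<Rightarrow> real)"
    and "\<And>e. e > 0 \<Longrightarrow> absK z < e" shows "z = 0"
  using absK_facts[OF K] assms(2)[of "absK z"] by (metis less_irrefl order_le_less)

context fixes p :: nat and iota :: "(nat \<Rightarrow> int) \<Rightarrow> 'k::field" and absK
  assumes p2: "p \<ge> 2" and K: "padic_extension p iota absK"
begin

lemma iota_add: "x \<in> zp p \<Longrightarrow> y \<in> zp p \<Longrightarrow> iota (zp_add p x y) = iota x + iota y"
  using K unfolding padic_extension_def by auto

lemma iota_abs: "x \<in> zp p \<Longrightarrow> absK (iota x) = padic_abs p x"
  using K unfolding padic_extension_def by auto

lemma iota_zero: "iota (zp_of_nat p 0) = 0"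
proof -
  have z: "zp_of_nat p 0 \<in> zp p" by (rule zp_of_nat_zp[OF p2])
  have "iota (zp_of_nat p 0) = iota (zp_of_nat p 0) + iota (zp_of_nat p 0)"
    using iota_add[OF z z] zp_zero_add[OF p2] by metis
  then show ?thesis by (metis add.right_neutral add_left_cancel)
qed

lemma iota_sub:
  assumes a: "a \<in> zp p" and b: "b \<in> zp p"
  shows "iota a - iota b = iota (zp_add p a (zp_neg p b))"
proof -
  have nb: "zp_neg p b \<in> zp p" by (rule zp_neg_zp[OF p2 b])
  have "iota b + iota (zp_neg p b) = 0"
    using iota_add[OF b nb] zp_add_neg[OF p2, of b] iota_zero by simp
  then have "iota (zp_neg p b) = - iota b" by (simp add: eq_neg_iff_add_eq_0 add.commute)
  then show ?thesis using iota_add[OF a nb] by simp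
qed

lemma iota_close:
  assumes a: "a \<in> zp p" and b: "b \<in> zp p" and ab: "a k = b k"
  shows "absK (iota a - iota b) \<le> inverse (real p ^ k)"
proof -
  have d: "zp_add p a (zp_neg p b) \<in> zp p" by (intro zp_add_zp zp_neg_zp p2 a b)
  have "zp_add p a (zp_neg p b) k = 0" using zp_add_neg_val[OF p2] ab by simp
  then have "padic_abs p (zp_add p a (zp_neg p b)) \<le> inverse (real p ^ k)"
    by (rule padic_abs_le[OF p2 d])
  then show ?thesis using iota_sub[OF a b] iota_abs[OF d] by simp
qed

lemma iota_close2:
  assumes a: "a \<in> zp p" and b: "b \<in> zp p" and lt: "absK (iota a - iota b) < inverse (real p ^ k)"
  shows "a k = b k"
proof -
  have d: "zp_add p a (zp_neg p b) \<in> zp p" by (intro zp_add_zp zp_neg_zp p2 a b)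
  have "padic_abs p (zp_add p a (zp_neg p b)) < inverse (real p ^ k)"
    using lt iota_sub[OF a b] iota_abs[OF d] by simp
  then have "zp_add p a (zp_neg p b) k = 0" by (rule padic_abs_small[OF p2 d])
  then have "(a k - b k) mod int p ^ k = 0" using zp_add_neg_val[OF p2] by simp
  then have "a k mod int p ^ k = b k mod int p ^ k" by (simp add: mod_eq_dvd_iff dvd_eq_mod_eq_0)
  moreover have "a k mod int p ^ k = a k" using zpD[OF a, of k] by simp
  moreover have "b k mod int p ^ k = b k" using zpD[OF b, of k] by simp
  ultimately show ?thesis by simp
qed

end



lemma pigeon:
  fixes F :: "nat \<Rightarrow> 'a set" and G :: "'b \<Rightarrow> 'a set"
  assumes dec: "\<And>k. F (Suc k) \<subseteq> F k" and inf: "\<And>k. infinite (F k)" and fin: "finite I"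
    and cov: "\<And>k. F k \<subseteq> (\<Union>j\<in>I. G j)"
  shows "\<exists>j\<in>I. \<forall>k. infinite (F k \<inter> G j)"
proof (rule ccontr)
  assume "\<not> ?thesis"
  then have "\<forall>j\<in>I. \<exists>k. finite (F k \<inter> G j)" by auto
  then obtain kf where kf: "\<And>j. j \<in> I \<Longrightarrow> finite (F (kf j) \<inter> G j)" by metis
  define K where "K = (\<Sum>j\<in>I. kf j)"
  have le: "kf j \<le> K" if "j \<in> I" for j
    unfolding K_def using fin that by (intro member_le_sum) auto
  have sub: "F K \<subseteq> F (kf j)" if "j \<in> I" for j
    using lift_Suc_antimono_le[of F, OF dec le[OF that]] .
  have "F K = (\<Union>j\<in>I. F K \<inter> G j)" using cov[of K] by auto
  moreover have "finite (\<Union>j\<in>I. F K \<inter> G j)"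
  proof (rule finite_UN_I[OF fin])
    fix j assume "j \<in> I"
    then show "finite (F K \<inter> G j)" using kf sub by (meson Int_mono finite_subset order_refl)
  qed
  ultimately show False using inf[of K] by simp
qed

lemma compact_nat:
  fixes F :: "nat \<Rightarrow> nat set" and p :: nat
  assumes p2: "p \<ge> 2" and dec: "\<And>k. F (Suc k) \<subseteq> F k" and inf: "\<And>k. infinite (F k)"
  shows "\<exists>y\<in>zp p. \<forall>k b. infinite {n\<in>F k. int n mod int p ^ b = y b}"
proof -
  define P where "P = (\<lambda>b (u::int). 0 \<le> u \<and> u < int p ^ b \<and> (\<forall>k. infinite {n\<in>F k. int n mod int p ^ b = u}))"
  define st where "st = (\<lambda>b u. SOME v. P (Suc b) v \<and> v mod int p ^ b = u)"
  define y where "y = rec_nat 0 st"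
  have y0: "y 0 = 0" and yS: "\<And>b. y (Suc b) = st b (y b)" by (simp_all add: y_def)
  have step: "\<exists>v. P (Suc b) v \<and> v mod int p ^ b = u" if Pu: "P b u" for b u
  proof -
    define F' where "F' = (\<lambda>k. {n\<in>F k. int n mod int p ^ b = u})"
    have pp: "(0::int) < int p ^ Suc b" using p2 by simp
    have "\<exists>v\<in>{0..<int p ^ Suc b}. \<forall>k. infinite (F' k \<inter> {n. int n mod int p ^ Suc b = v})"
    proof (rule pigeon)
      show "F' (Suc k) \<subseteq> F' k" for k using dec by (auto simp: F'_def)
      show "infinite (F' k)" for k using Pu by (simp add: P_def F'_def)
      show "finite {0..<int p ^ Suc b}" by simp
      show "F' k \<subseteq> (\<Union>v\<in>{0..<int p ^ Suc b}. {n. int n mod int p ^ Suc b = v})" for k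
        using pos_mod_sign[OF pp] pos_mod_bound[OF pp] by auto
    qed
    then obtain v where v: "v \<in> {0..<int p ^ Suc b}"
      and vi: "\<And>k. infinite (F' k \<inter> {n. int n mod int p ^ Suc b = v})" by blast
    obtain n where n: "n \<in> F' 0 \<inter> {n. int n mod int p ^ Suc b = v}"
      using vi[of 0] by (metis finite.emptyI ex_in_conv)
    have dv: "int p ^ b dvd int p ^ Suc b" by simp
    have vu: "v mod int p ^ b = u"
      using n mod_mod_cancel[OF dv, of "int n"] by (auto simp: F'_def)
    have eq: "F' k \<inter> {n. int n mod int p ^ Suc b = v} = {n\<in>F k. int n mod int p ^ Suc b = v}" for k
      using mod_mod_cancel[OF dv] vu by (auto simp: F'_def)
    show ?thesis using v vi vu eq by (auto simp: P_def)
  qed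
  have R: "P (Suc b) (y (Suc b)) \<and> y (Suc b) mod int p ^ b = y b" if "P b (y b)" for b
    using yS[of b] someI_ex[OF step[OF that]] by (simp add: st_def)
  have P0: "P b (y b)" for b
  proof (induction b)
    case 0
    show ?case using inf y0 by (simp add: P_def)
  next
    case (Suc b)
    then show ?case using R by blast
  qed
  have Py: "P b (y b) \<and> (y (Suc b) mod int p ^ b = y b)" for b using P0 R by blast
  have "y \<in> zp p" using Py by (auto simp: zp_def P_def)
  moreover have "\<forall>k b. infinite {n\<in>F k. int n mod int p ^ b = y b}" using Py by (simp add: P_def)
  ultimately show ?thesis by blast
qed




context fixes p :: nat assumes p2: "p \<ge> 2" begin

lemma coset_zp: "y \<in> zp_coset p r q \<Longrightarrow> y \<in> zp p"
  unfolding zp_coset_def by (auto intro!: zp_add_zp zp_mul_zp zp_of_nat_zp p2)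

lemma coset_mod:
  assumes y: "y \<in> zp_coset p r q" and q: "q = p ^ e" and r: "r < q" and eB: "e \<le> B"
  shows "y B mod int q = int r"
proof -
  obtain z where yz: "y = zp_add p (zp_of_nat p r) (zp_mul p (zp_of_nat p q) z)"
    using y unfolding zp_coset_def by auto
  define P where "P = int p ^ B"
  have dv: "int q dvd P" unfolding P_def q using eB by (simp add: le_imp_power_dvd)
  have c: "a mod P mod int q = a mod int q" for a using dv by (rule mod_mod_cancel)
  have "y B = (int r mod P + (int q mod P * z B) mod P) mod P"
    by (simp add: yz zp_add_def zp_mul_def zp_of_nat_def P_def)
  then have "y B mod int q = (int r mod P + (int q mod P * z B) mod P) mod int q" by (simp add: c)
  also have "\<dots> = (int r mod P mod int q + (int q mod P * z B) mod P mod int q) mod int q"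
    by (simp add: mod_add_eq)
  also have "\<dots> = (int r + (int q mod P * z B)) mod int q" by (simp add: c mod_add_eq)
  also have "\<dots> = (int r + (int q mod P mod int q * z B)) mod int q"
    by (metis mod_add_right_eq mod_mult_left_eq)
  also have "\<dots> = int r" using r by (simp add: c)
  finally show ?thesis .
qed

lemma coset_intro:
  assumes y: "y \<in> zp p" and q: "q = p ^ e" and r: "r < q"
    and ym: "\<And>B. e \<le> B \<Longrightarrow> y B mod int q = int r"
  shows "y \<in> zp_coset p r q"
proof -
  have qpos: "int q > 0" using q p2 by simp
  define w where "w = (\<lambda>k. (y (k + e) - int r) div int q)"
  have wq: "y (k + e) - int r = int q * w k" for k
  proof -
    have "int q dvd y (k + e) - int r" using ym[of "k+e"] r
      by (simp add: mod_eq_dvd_iff[symmetric])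
    then show ?thesis unfolding w_def by simp
  qed
  define z where "z = (\<lambda>k. w k mod int p ^ k)"
  have pp: "(0::int) < int p ^ k" for k using p2 by simp
  have z: "z \<in> zp p"
  proof (rule zpI)
    fix k
    show "0 \<le> z k" "z k < int p ^ k" unfolding z_def using pp by auto
    have "y (Suc k + e) mod int p ^ (k + e) = y (k + e)" using zpD[OF y, of "k+e"] by simp
    then have "int p ^ (k + e) dvd y (Suc k + e) - y (k + e)"
      by (metis mod_eq_dvd_iff zp_compat[OF y] le_add2 mod_mod_trivial)
    then have "int q * int p ^ k dvd int q * (w (Suc k) - w k)"
      using wq[of "Suc k"] wq[of k] by (simp add: q power_add algebra_simps)
    then have "int p ^ k dvd w (Suc k) - w k" using qpos by simp
    then have "w (Suc k) mod int p ^ k = w k mod int p ^ k" by (simp add: mod_eq_dvd_iff)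
    then show "z (Suc k) mod int p ^ k = z k" unfolding z_def
      by (simp add: modsuc[OF p2])
  qed
  have "y = zp_add p (zp_of_nat p r) (zp_mul p (zp_of_nat p q) z)"
  proof (rule ext)
    fix k
    define P where "P = int p ^ k"
    have "zp_add p (zp_of_nat p r) (zp_mul p (zp_of_nat p q) z) k
        = (int r mod P + (int q mod P * (w k mod P)) mod P) mod P"
      by (simp add: zp_add_def zp_mul_def zp_of_nat_def z_def P_def)
    also have "\<dots> = (int r + int q * w k) mod P" by (metis mod_add_eq mod_mult_eq)
    also have "\<dots> = y (k + e) mod P"
    proof -
      have "int r + int q * w k = y (k + e)" using wq[of k] by linarith
      then show ?thesis by simp
    qed
    also have "\<dots> = y k" unfolding P_def by (rule zp_compat[OF y]) simp
    finally show "y k = zp_add p (zp_of_nat p r) (zp_mul p (zp_of_nat p q) z) k" by simp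
  qed
  then show ?thesis using z unfolding zp_coset_def by auto
qed

lemma crt_exists:
  assumes f: "f \<ge> 1" and i: "i < p ^ f - 1"
  shows "\<exists>n\<ge>M0. n mod (p ^ f - 1) = i \<and> n mod p ^ B = t mod p ^ B"
proof -
  define m where "m = p ^ f - 1"
  have pf: "p ^ f > 0" using p2 by simp
  have c1: "coprime m (p ^ f)" unfolding m_def by (rule coprime_diff_one_left_nat[OF pf])
  have "p dvd p ^ f" using f by (simp add: dvd_power)
  then have "coprime m p" using c1 by (meson coprime_divisors dvd_refl)
  then have cop: "coprime m (p ^ B)" by simp
  obtain x where x: "[x = i] (mod m)" "[x = t] (mod p ^ B)"
    using binary_chinese_remainder_nat[OF cop] by blast
  define n where "n = x + M0 * (m * p ^ B)"
  have mpos: "m * p ^ B \<ge> 1" using i p2 m_def by (simp add: Suc_le_eq)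
  have "n \<ge> M0" unfolding n_def using mpos by (metis le_add2 mult.right_neutral mult_le_mono2 order_trans)
  moreover have "n mod m = i"
  proof -
    have "n = x + (M0 * p ^ B) * m" by (simp add: n_def algebra_simps)
    then have "n mod m = x mod m" by simp
    then show ?thesis using x(1) i m_def by (simp add: cong_def)
  qed
  moreover have "n mod p ^ B = t mod p ^ B"
  proof -
    have "n = x + (M0 * m) * p ^ B" by (simp add: n_def algebra_simps)
    then have "n mod p ^ B = x mod p ^ B" by simp
    then show ?thesis using x(2) by (simp add: cong_def)
  qed
  ultimately show ?thesis unfolding m_def by blast
qed

lemma approx_exists:
  assumes f: "f \<ge> 1" and i: "i < p ^ f - 1" and y: "y \<in> zp_coset p r q"
    and q: "q = p ^ e" and r: "r < q"
  shows "\<exists>n\<ge>M0. n mod (p ^ f - 1) = i \<and> n mod q = r \<and> int n mod int p ^ b = y b"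
proof -
  define B where "B = max b e"
  have yz: "y \<in> zp p" by (rule coset_zp[OF y])
  have yB: "0 \<le> y B" "y B < int p ^ B" using zpD[OF yz, of B] by auto
  define t where "t = nat (y B)"
  obtain n where n: "n \<ge> M0" "n mod (p ^ f - 1) = i" "n mod p ^ B = t mod p ^ B"
    using crt_exists[OF f i] by blast
  have "t < p ^ B" using yB unfolding t_def by (simp add: nat_less_iff)
  then have "int n mod int p ^ B = y B" using n(3) yB unfolding t_def
    by (metis int_nat_eq mod_less of_nat_mod of_nat_power nat_int)
  moreover have "int p ^ b dvd int p ^ B" "int q dvd int p ^ B"
    unfolding B_def q by (simp_all add: le_imp_power_dvd)
  ultimately have "int n mod int p ^ b = y b" "int n mod int q = int r"
    using mod_mod_cancel zp_compat[OF yz, of b B] coset_mod[OF y q r, of B] B_def by (metis max.cobounded1 max.cobounded2)+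
  then show ?thesis using n by (metis of_nat_eq_iff of_nat_mod)
qed

end



lemma eventually_small:
  fixes C D eps :: real
  assumes "0 \<le> D" "D < 1" "eps > 0"
  shows "\<exists>M0. \<forall>n\<ge>M0. C * D ^ n < eps"
proof -
  have "(\<lambda>n. C * D ^ n) \<longlonglongrightarrow> C * 0"
    using assms by (intro tendsto_mult tendsto_const LIMSEQ_power_zero) auto
  then have "eventually (\<lambda>n. C * D ^ n < eps) sequentially"
    using assms(3) by (simp add: order_tendstoD(2))
  then show ?thesis by (simp add: eventually_sequentially)
qed

lemma small_pow:
  assumes p2: "(p::nat) \<ge> 2" and e: "(eps::real) > 0"
  shows "\<exists>K. inverse (real p ^ K) < eps"
proof -
  have "real p > 1" using p2 by simp
  then have "inverse (real p) < 1" by (simp add: inverse_less_1_iff)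
  then obtain K where "inverse (real p) ^ K < eps"
    using real_arch_pow_inv[OF e] by blast
  then show ?thesis by (metis power_inverse)
qed

theorem theorem4p3:
  fixes p f q :: nat
    and iota :: "(nat \<Rightarrow> int) \<Rightarrow> 'k::field"
    and absK :: "'k \<Rightarrow> real"
    and s :: "nat \<Rightarrow> (nat \<Rightarrow> int)"
    and sir :: "nat \<Rightarrow> nat \<Rightarrow> (nat \<Rightarrow> int) \<Rightarrow> 'k"
    and A :: "nat \<Rightarrow> nat \<Rightarrow> nat set"
    and M :: "(nat \<Rightarrow> int) measure"
  assumes p: "prime p" and f: "f \<ge> 1" and q: "\<exists>e. q = p ^ e"
    and K: "padic_extension p iota absK"
    and A_def: "\<And>i r. A i r = {m. m mod (p ^ f - 1) = i \<and> m mod q = r}"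
    and s_zp: "\<And>n. s n \<in> zp p"
    and sir_cont: "\<And>i r. i \<le> p ^ f - 2 \<Longrightarrow> r \<le> q - 1 \<Longrightarrow> zp_continuous p absK (sir i r)"
    and interp: "\<exists>C D::real. C \<ge> 0 \<and> 0 \<le> D \<and> D < 1 \<and>
        (\<forall>i r n. i \<le> p ^ f - 2 \<longrightarrow> r \<le> q - 1 \<longrightarrow> n \<in> A i r \<longrightarrow>
            absK (iota (s n) - sir i r (zp_of_nat p n)) \<le> C * D ^ n)"
    and M_space: "space M = zp p"
    and M_sets: "sets M = sigma_sets (zp p) {zp_ball p m a | m a. m \<in> zp p}"
    and M_haar: "\<And>m a. m \<in> zp p \<Longrightarrow> emeasure M (zp_ball p m a) = ennreal (inverse (real p ^ a))"
  shows "(\<lambda>a. real (card ((\<lambda>n. s n a) ` UNIV)) / real p ^ a)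
           \<longlonglongrightarrow> measure M (zp p \<inter> (\<Union>i\<in>{0..p ^ f - 2}. \<Union>r\<in>{0..q - 1}.
                 {x. \<exists>y\<in>zp_coset p r q. iota x = sir i r y}))"
proof -
  have p2: "p \<ge> 2" using p by (simp add: prime_ge_2_nat)
  obtain e where qe: "q = p ^ e" using q by blast
  have qpos: "q > 0" using qe p2 by simp
  obtain C D :: real where CD: "C \<ge> 0" "0 \<le> D" "D < 1"
    and CDb: "\<And>i r n. i \<le> p ^ f - 2 \<Longrightarrow> r \<le> q - 1 \<Longrightarrow> n \<in> A i r \<Longrightarrow>
            absK (iota (s n) - sir i r (zp_of_nat p n)) \<le> C * D ^ n"
    using interp by blast
  have pf: "p ^ f \<ge> 2" using p2 f by (metis le_trans power_increasing power_one_right one_le_numeral order.trans)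
  have irng: "i \<le> p ^ f - 2 \<longleftrightarrow> i < p ^ f - 1" for i using pf by auto
  have rrng: "r \<le> q - 1 \<longleftrightarrow> r < q" for r using qpos by auto
  note F = absK_facts[OF K]
  define T where "T = zp p \<inter> (\<Union>i\<in>{0..p ^ f - 2}. \<Union>r\<in>{0..q - 1}.
                 {x. \<exists>y\<in>zp_coset p r q. iota x = sir i r y})"
  define U where "U = (\<lambda>a. {x \<in> zp p. \<exists>n. s n a = x a})"
  define clS where "clS = (\<Inter>a. U a)"

  have T_sub: "T \<subseteq> clS"
  proof
    fix x assume "x \<in> T"
    then obtain i r y where x: "x \<in> zp p" and i: "i \<le> p ^ f - 2" and r: "r \<le> q - 1"
      and y: "y \<in> zp_coset p r q" and xy: "iota x = sir i r y"
      unfolding T_def by auto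
    have yz: "y \<in> zp p" using coset_zp[OF p2 y] .
    have "\<exists>n. s n a = x a" for a
    proof -
      define eps where "eps = inverse (real p ^ a) / 2"
      have eps: "eps > 0" using p2 unfolding eps_def by simp
      obtain b where b: "\<And>y'. y' \<in> zp p \<Longrightarrow> y' b = y b \<Longrightarrow> absK (sir i r y' - sir i r y) < eps"
        using sir_cont[OF i r] yz eps unfolding zp_continuous_def by blast
      obtain M0 where M0: "\<And>n. n \<ge> M0 \<Longrightarrow> C * D ^ n < eps"
        using eventually_small[OF CD(2,3) eps] by blast
      obtain n where n: "n \<ge> M0" "n mod (p ^ f - 1) = i" "n mod q = r" "int n mod int p ^ b = y b"
        using approx_exists[OF p2 f _ y qe, of i M0 b] i r irng rrng by blast
      have nA: "n \<in> A i r" using n A_def by simp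
      have zn: "zp_of_nat p n \<in> zp p" by (rule zp_of_nat_zp[OF p2])
      have d1: "absK (iota (s n) - sir i r (zp_of_nat p n)) < eps"
        using CDb[OF i r nA] M0[OF n(1)] by linarith
      have d2: "absK (sir i r (zp_of_nat p n) - sir i r y) < eps"
        using b[OF zn] n(4) by (simp add: zp_of_nat_def)
      have eq: "iota (s n) - iota x = (iota (s n) - sir i r (zp_of_nat p n)) + (sir i r (zp_of_nat p n) - sir i r y)"
        using xy by simp
      have "absK (iota (s n) - iota x) \<le> absK (iota (s n) - sir i r (zp_of_nat p n)) + absK (sir i r (zp_of_nat p n) - sir i r y)"
        unfolding eq by (rule F(3))
      then have "absK (iota (s n) - iota x) < inverse (real p ^ a)"
        using d1 d2 unfolding eps_def by linarith
      then show ?thesis using iota_close2[OF p2 K s_zp x] by blast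
    qed
    then show "x \<in> clS" using x unfolding clS_def U_def by auto
  qed

  have cl_sub: "clS - T \<subseteq> range s"
  proof
    fix x assume xc: "x \<in> clS - T"
    show "x \<in> range s"
    proof (rule ccontr)
      assume nx: "x \<notin> range s"
      have x: "x \<in> zp p" using xc unfolding clS_def U_def by auto
      have xa: "\<exists>n. s n a = x a" for a using xc unfolding clS_def U_def by auto
      define Fk where "Fk = (\<lambda>k. {n. s n k = x k})"
      have decF: "Fk (Suc k) \<subseteq> Fk k" for k
        unfolding Fk_def using zpD[OF s_zp] zpD[OF x] by (metis (mono_tags, lifting) mem_Collect_eq subsetI)
      have infF: "infinite (Fk k)" for k
      proof
        assume fin: "finite (Fk k)"
        have "\<forall>n\<in>Fk k. \<exists>a. s n a \<noteq> x a" using nx by (metis rangeI ext)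
        then obtain af where af: "\<And>n. n \<in> Fk k \<Longrightarrow> s n (af n) \<noteq> x (af n)" by metis
        define a where "a = k + (\<Sum>n\<in>Fk k. af n)"
        obtain m where m: "s m a = x a" using xa by blast
        have ka: "k \<le> a" unfolding a_def by simp
        have "s m k = x k" using zp_compat[OF s_zp, of k a m] zp_compat[OF x ka] m ka by simp
        then have mF: "m \<in> Fk k" unfolding Fk_def by simp
        have "af m \<le> a" unfolding a_def using fin mF by (simp add: member_le_sum trans_le_add2)
        then have "s m (af m) = x (af m)"
          using zp_compat[OF s_zp, of "af m" a m] zp_compat[OF x, of "af m" a] m by simp
        then show False using af[OF mF] by simp
      qed
      have "\<exists>j\<in>{0..<p ^ f - 1} \<times> {0..<q}. \<forall>k. infinite (Fk k \<inter> (case j of (i, r) \<Rightarrow> A i r))"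
      proof (rule pigeon[of Fk, OF decF infF])
        show "finite ({0..<p ^ f - 1} \<times> {0..<q})" by simp
        show "Fk k \<subseteq> (\<Union>j\<in>{0..<p ^ f - 1} \<times> {0..<q}. case j of (i, r) \<Rightarrow> A i r)" for k
        proof
          fix n assume "n \<in> Fk k"
          have "n \<in> A (n mod (p ^ f - 1)) (n mod q)" using A_def by simp
          moreover have "(n mod (p ^ f - 1), n mod q) \<in> {0..<p ^ f - 1} \<times> {0..<q}"
            using pf qpos by simp
          ultimately show "n \<in> (\<Union>j\<in>{0..<p ^ f - 1} \<times> {0..<q}. case j of (i, r) \<Rightarrow> A i r)" by blast
        qed
      qed
      then obtain i r where ir: "i < p ^ f - 1" "r < q" and infA: "\<And>k. infinite (Fk k \<inter> A i r)"
        by auto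
      have i: "i \<le> p ^ f - 2" and r: "r \<le> q - 1" using ir irng rrng by auto
      obtain y where yz: "y \<in> zp p" and yinf: "\<And>k b. infinite {n\<in>Fk k \<inter> A i r. int n mod int p ^ b = y b}"
        using compact_nat[OF p2, of "\<lambda>k. Fk k \<inter> A i r"] decF infA by blast
      have y: "y \<in> zp_coset p r q"
      proof (rule coset_intro[OF p2 yz qe ir(2)])
        fix B assume eB: "e \<le> B"
        obtain n where n: "n \<in> Fk 0 \<inter> A i r" "int n mod int p ^ B = y B"
          using yinf[of 0 B] by (metis (mono_tags, lifting) empty_iff finite.emptyI mem_Collect_eq subsetI subset_antisym)
        have dv: "int q dvd int p ^ B" using eB qe by (simp add: le_imp_power_dvd)
        have "n mod q = r" using n(1) A_def by simp
        then have "int n mod int q = int r" by (metis of_nat_mod)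
        then show "y B mod int q = int r" using n(2) mod_mod_cancel[OF dv, of "int n"] by simp
      qed
      have "iota x - sir i r y = 0"
      proof (rule absK_zeroI[OF K])
        fix e' :: real assume e': "e' > 0"
        define eps where "eps = e' / 3"
        have eps: "eps > 0" using e' unfolding eps_def by simp
        obtain a where a: "\<And>y'. y' \<in> zp p \<Longrightarrow> y' a = y a \<Longrightarrow> absK (sir i r y' - sir i r y) < eps"
          using sir_cont[OF i r] yz eps unfolding zp_continuous_def by blast
        obtain M0 where M0: "\<And>n. n \<ge> M0 \<Longrightarrow> C * D ^ n < eps"
          using eventually_small[OF CD(2,3) eps] by blast
        obtain Kk where Kk: "inverse (real p ^ Kk) < eps" using small_pow[OF p2 eps] by blast
        obtain n where n: "n \<ge> M0" "n \<in> Fk Kk \<inter> A i r" "int n mod int p ^ a = y a"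
          using yinf[of Kk a] unfolding infinite_nat_iff_unbounded_le by blast
        have zn: "zp_of_nat p n \<in> zp p" by (rule zp_of_nat_zp[OF p2])
        have d1: "absK (iota (s n) - sir i r (zp_of_nat p n)) < eps"
          using CDb[OF i r] n(2) M0[OF n(1)] by (meson IntD2 le_less_trans)
        have d2: "absK (sir i r (zp_of_nat p n) - sir i r y) < eps"
          using a[OF zn] n(3) by (simp add: zp_of_nat_def)
        have "absK (iota (s n) - iota x) \<le> inverse (real p ^ Kk)"
          using iota_close[OF p2 K s_zp x] n(2) unfolding Fk_def by blast
        moreover have "iota x - iota (s n) = - (iota (s n) - iota x)" by simp
        ultimately have d0: "absK (iota x - iota (s n)) < eps"
          using absK_minus[OF K] Kk by (metis le_less_trans)
        have "absK (iota x - sir i r y) \<le> absK (iota x - iota (s n)) + absK (iota (s n) - sir i r (zp_of_nat p n))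
               + absK (sir i r (zp_of_nat p n) - sir i r y)" by (rule absK_tri3[OF K])
        then show "absK (iota x - sir i r y) < e'" using d0 d1 d2 unfolding eps_def by linarith
      qed
      then have "x \<in> zp p \<and> i \<in> {0..p^f-2} \<and> r \<in> {0..q-1} \<and> (\<exists>y\<in>zp_coset p r q. iota x = sir i r y)"
        using x i r y by auto
      then have "x \<in> T" unfolding T_def by blast
      then show False using xc by simp
    qed
  qed
  have ball_sets: "zp_ball p m a \<in> sets M" if "m \<in> zp p" for m a
    unfolding M_sets using that by (auto intro!: sigma_sets.Basic)
  have ball0: "zp_ball p (zp_of_nat p 0) 0 = zp p"
    unfolding zp_ball_def using zp_0 by (auto simp: zp_of_nat_def)
  have finM: "finite_measure M"
  proof
    show "emeasure M (space M) \<noteq> \<infinity>"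
      using M_haar[OF zp_of_nat_zp[OF p2], of 0 0] ball0 M_space by simp
  qed
  then interpret finite_measure M .
  define V where "V = (\<lambda>a. (\<lambda>n. s n a) ` UNIV)"
  define c where "c = (\<lambda>(a::nat) (v::int). zp_of_nat p (nat v))"
  have cz: "c a v \<in> zp p" for a v unfolding c_def by (rule zp_of_nat_zp[OF p2])
  have cv: "c a v a = v" if "v \<in> V a" for a v
  proof -
    have "v \<in> range (\<lambda>n. s n a)" using that V_def by simp
    then obtain n where v: "v = s n a" by blast
    have "0 \<le> v" "v < int p ^ a" using zpD[OF s_zp, of n a] v by auto
    then show ?thesis unfolding c_def zp_of_nat_def by simp
  qed
  have U_eq: "U a = (\<Union>v\<in>V a. zp_ball p (c a v) a)" for a
    unfolding U_def zp_ball_def V_def using cv[unfolded V_def] by auto metis+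
  have finV: "finite (V a)" for a
  proof (rule finite_subset)
    show "V a \<subseteq> {0..<int p ^ a}" unfolding V_def using zpD[OF s_zp] by auto
  qed simp
  have disj: "disjoint_family_on (\<lambda>v. zp_ball p (c a v) a) (V a)" for a
    unfolding disjoint_family_on_def zp_ball_def using cv by auto
  have U_sets: "U a \<in> sets M" for a
    unfolding U_eq using finV ball_sets[OF cz] by (intro sets.finite_UN) auto
  have U_meas: "emeasure M (U a) = ennreal (real (card (V a)) / real p ^ a)" for a
  proof -
    have "emeasure M (U a) = (\<Sum>v\<in>V a. emeasure M (zp_ball p (c a v) a))"
      unfolding U_eq using finV disj ball_sets[OF cz] by (intro sum_emeasure[symmetric]) auto
    also have "\<dots> = (\<Sum>v\<in>V a. ennreal (inverse (real p ^ a)))" using M_haar[OF cz] by simp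
    also have "\<dots> = ennreal (real (card (V a)) / real p ^ a)"
      by (simp add: ennreal_of_nat_eq_real_of_nat ennreal_mult' divide_inverse)
    finally show ?thesis .
  qed
  have meas_U: "measure M (U a) = real (card (V a)) / real p ^ a" for a
    using U_meas[of a] by (simp add: emeasure_eq_measure)
  have decU: "decseq U"
  proof (rule decseq_SucI)
    fix a show "U (Suc a) \<subseteq> U a"
      unfolding U_def using zpD[OF s_zp] by (auto, metis zpD)
  qed
  have lim: "(\<lambda>a. measure M (U a)) \<longlonglongrightarrow> measure M clS"
    unfolding clS_def using U_sets decU by (intro finite_Lim_measure_decseq) auto
  have clS_sets: "clS \<in> sets M" unfolding clS_def using U_sets by auto
  have single_null: "{x} \<in> null_sets M" if x: "x \<in> zp p" for x
  proof -
    have sx: "{x} = (\<Inter>a. zp_ball p x a)"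
      unfolding zp_ball_def using x by (auto intro: zp_eqI)
    have sxs: "{x} \<in> sets M" unfolding sx using ball_sets[OF x] by auto
    have le: "measure M {x} \<le> inverse (real p ^ a)" for a
    proof -
      have "measure M {x} \<le> measure M (zp_ball p x a)"
        using ball_sets[OF x] sx by (intro finite_measure_mono) auto
      also have "\<dots> = inverse (real p ^ a)" using M_haar[OF x, of a] by (simp add: emeasure_eq_measure)
      finally show ?thesis .
    qed
    have "measure M {x} \<le> 0"
    proof (rule field_le_epsilon)
      fix eps :: real assume "eps > 0"
      then obtain K where "inverse (real p ^ K) < eps" using small_pow[OF p2] by blast
      then show "measure M {x} \<le> 0 + eps" using le[of K] by simp
    qed
    then have "measure M {x} = 0" by (simp add: measure_nonneg antisym)
    then show ?thesis using sxs by (simp add: emeasure_eq_measure null_sets_def)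
  qed
  have N_null: "clS - T \<in> null_sets M"
  proof -
    have "clS - T = (\<Union>x\<in>clS - T. {x})" by auto
    also have "\<dots> \<in> null_sets M"
    proof (rule null_sets_UN')
      show "countable (clS - T)" using cl_sub by (rule countable_subset) simp
      show "{x} \<in> null_sets M" if "x \<in> clS - T" for x
        using that single_null unfolding clS_def U_def by auto
    qed
    finally show ?thesis .
  qed
  have "measure M T = measure M clS"
  proof -
    have "T = clS - (clS - T)" using T_sub by auto
    then show ?thesis using measure_Diff_null_set[OF clS_sets N_null] by simp
  qed
  then show ?thesis using lim meas_U unfolding T_def V_def by simp
qed


end
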